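(* For every positive integer $n$, \[ {}_{H}w_{n}(x)=\sum_{l=0}^{n}\sum_{k=1}^{n}\sum_{j=0}^{k}\frac{(-1)^{k+1}}{k}\binom{n}{l}\genfrac{\{}{\}}{0pt}{}{n-l}{k}\genfrac{[}{]}{0pt}{}{k+1}{j+1}\,w_{l+j}(x)\left(\frac{x}{1+x}\right)^{k}. \]
   Context: $\genfrac{\{}{\}}{0pt}{}{n}{k}$ denotes the Stirling numbers of the second kind and $\genfrac{[}{]}{0pt}{}{n}{k}$ the unsigned Stirling numbers of the first kind. The geometric polynomials are $w_n(x)=\sum_{k=0}^{n}\genfrac{\{}{\}}{0pt}{}{n}{k}k!\,x^k$ (so $w_0(x)=1$). With $H_k=\sum_{i=1}^k 1/i$ the harmonic numbers, the harmonic geometric polynomials are ${}_{H}w_n(x)=\sum_{k=1}^{n}\genfrac{\{}{\}}{0pt}{}{n}{k}k!\,H_k\,x^k$ (so ${}_Hw_0(x)=0$). *)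

theory Defs
  imports "HOL-Analysis.Analysis" "HOL-Combinatorics.Stirling"
begin

definition geom_poly :: "nat \<Rightarrow> real \<Rightarrow> real" where
  "geom_poly n x = (\<Sum>k=0..n. real (Stirling n k) * fact k * x ^ k)"

definition harm_geom_poly :: "nat \<Rightarrow> real \<Rightarrow> real" where
  "harm_geom_poly n x = (\<Sum>k=1..n. real (Stirling n k) * fact k * harm k * x ^ k)"

end

theory Submission
  imports Defs
begin

lemma alt_shift: "(\<Sum>k\<le>K. (-1)^k * real (Suc K choose Suc k)) = 1"
proof -
  have "(\<Sum>i\<le>Suc K. (-1)^i * real (Suc K choose i)) = 0"
    by (rule choose_alternating_sum) simp
  then have "1 + (\<Sum>i\<le>K. (-1)^(Suc i) * real (Suc K choose Suc i)) = 0"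
    by (simp only: sum.atMost_Suc_shift) simp
  then show ?thesis by (simp add: sum_negf)
qed

lemma harm_binom: "(harm K :: real) = (\<Sum>k\<le>K. (-1)^(k+1) / real k * real (K choose k))"
proof (induction K)
  case 0
  then show ?case by (simp add: harm_def)
next
  case (Suc K)
  have "(\<Sum>k\<le>Suc K. (-1)^(k+1) / real k * real (Suc K choose k))
      = (\<Sum>k\<le>K. (-1)^(k+2) / real (Suc k) * real (Suc K choose Suc k))"
    by (simp only: sum.atMost_Suc_shift) simp
  also have "\<dots> = (\<Sum>k\<le>K. (-1)^(k+2) / real (Suc k) * real (K choose k))
      + (\<Sum>k\<le>K. (-1)^(k+2) / real (Suc k) * real (K choose Suc k))"
    by (simp add: sum.distrib algebra_simps)
  also have "(\<Sum>k\<le>K. (-1)^(k+2) / real (Suc k) * real (K choose Suc k))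
      = (\<Sum>k\<le>Suc K. (-1)^(k+1) / real k * real (K choose k))"
    by (simp only: sum.atMost_Suc_shift) simp
  also have "\<dots> = (\<Sum>k\<le>K. (-1)^(k+1) / real k * real (K choose k))"
    by simp
  also have "(\<Sum>k\<le>K. (-1)^(k+2) / real (Suc k) * real (K choose k))
      = (\<Sum>k\<le>K. (-1)^k * real (Suc K choose Suc k)) / real (Suc K)"
  proof -
    have "(-1)^(k+2) / real (Suc k) * real (K choose k) = (-1)^k * real (Suc K choose Suc k) / real (Suc K)" for k
    proof -
      have "real (Suc K) * real (K choose k) = real (Suc K choose Suc k) * real (Suc k)"
        using Suc_times_binomial_eq[of K k] by (metis of_nat_mult)
      then show ?thesis by (simp add: field_simps del: binomial_Suc_Suc of_nat_Suc)
    qed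
    then show ?thesis by (simp add: sum_divide_distrib)
  qed
  also have "(\<Sum>k\<le>K. (-1)^k * real (Suc K choose Suc k)) / real (Suc K)
      + (\<Sum>k\<le>K. (-1)^(k+1) / real k * real (K choose k)) = harm K + inverse (real (Suc K))"
    unfolding alt_shift Suc.IH by (simp add: inverse_eq_divide)
  finally show ?case by (metis harm_Suc)
qed

lemma binconv_Suc:
  fixes a b :: "nat \<Rightarrow> nat"
  shows "(\<Sum>l\<le>Suc n. (Suc n choose l) * a (Suc n - l) * b l)
    = (\<Sum>l\<le>n. (n choose l) * a (Suc n - l) * b l) + (\<Sum>l\<le>n. (n choose l) * a (n - l) * b (Suc l))"
proof -
  have 1: "(\<Sum>l\<le>Suc n. (Suc n choose l) * a (Suc n - l) * b l)
     = a (Suc n) * b 0 + (\<Sum>l\<le>n. (n choose l) * a (n - l) * b (Suc l))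
       + (\<Sum>l\<le>n. (n choose Suc l) * a (n - l) * b (Suc l))"
    by (simp only: sum.atMost_Suc_shift) (simp add: sum.distrib algebra_simps)
  have "(\<Sum>l\<le>Suc n. (n choose l) * a (Suc n - l) * b l) = (\<Sum>l\<le>n. (n choose l) * a (Suc n - l) * b l)"
    by simp
  moreover have "(\<Sum>l\<le>Suc n. (n choose l) * a (Suc n - l) * b l)
     = a (Suc n) * b 0 + (\<Sum>l\<le>n. (n choose Suc l) * a (n - l) * b (Suc l))"
    by (simp only: sum.atMost_Suc_shift) simp
  ultimately show ?thesis using 1 by linarith
qed

lemma Stirling_0_right [simp]: "Stirling m 0 = (if m = 0 then 1 else 0)"
  by (cases m) auto

lemma stir_conv_k0: "(\<Sum>l\<le>n. (n choose l) * Stirling (n-l) 0 * Stirling l i) = Stirling n i"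
proof -
  have "(\<Sum>l\<le>n. (n choose l) * Stirling (n-l) 0 * Stirling l i) = (\<Sum>l\<le>n. if l = n then Stirling n i else 0)"
    by (rule sum.cong) auto
  then show ?thesis by simp
qed

lemma stir_conv_i0: "(\<Sum>l\<le>n. (n choose l) * Stirling (n-l) k * Stirling l 0) = Stirling n k"
proof -
  have "(\<Sum>l\<le>n. (n choose l) * Stirling (n-l) k * Stirling l 0) = (\<Sum>l\<le>n. if l = 0 then Stirling n k else 0)"
    by (rule sum.cong) auto
  then show ?thesis by simp
qed

lemma stir_conv:
  "(\<Sum>l\<le>n. (n choose l) * Stirling (n-l) k * Stirling l i) = ((i+k) choose k) * Stirling n (i+k)"
proof (induction n arbitrary: k i)
  case 0
  then show ?case by (cases k; cases i) auto
next
  case (Suc n)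
  show ?case
  proof (cases "k = 0 \<or> i = 0")
    case True
    then show ?thesis
    proof
      assume "k = 0"
      then show ?thesis using stir_conv_k0[of "Suc n" i] by simp
    next
      assume "i = 0"
      then show ?thesis using stir_conv_i0[of "Suc n" k] by simp
    qed
  next
    case False
    then obtain k' i' where k: "k = Suc k'" and i: "i = Suc i'" by (meson not0_implies_Suc)
    let ?T = "\<lambda>k i. (\<Sum>l\<le>n. (n choose l) * Stirling (n-l) k * Stirling l i)"
    have "(\<Sum>l\<le>Suc n. (Suc n choose l) * Stirling (Suc n - l) k * Stirling l i)
      = (\<Sum>l\<le>n. (n choose l) * Stirling (Suc n - l) k * Stirling l i) + (\<Sum>l\<le>n. (n choose l) * Stirling (n - l) k * Stirling (Suc l) i)"
      by (rule binconv_Suc)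
    also have "(\<Sum>l\<le>n. (n choose l) * Stirling (Suc n - l) k * Stirling l i)
       = Suc k' * ?T (Suc k') (Suc i') + ?T k' (Suc i')"
      unfolding k i sum_distrib_left sum.distrib[symmetric]
      by (rule sum.cong) (auto simp: Suc_diff_le algebra_simps)
    also have "(\<Sum>l\<le>n. (n choose l) * Stirling (n - l) k * Stirling (Suc l) i)
       = Suc i' * ?T (Suc k') (Suc i') + ?T (Suc k') i'"
      unfolding k i sum_distrib_left sum.distrib[symmetric]
      by (rule sum.cong) (auto simp: algebra_simps)
    finally have "(\<Sum>l\<le>Suc n. (Suc n choose l) * Stirling (Suc n - l) k * Stirling l i)
       = Suc k' * ?T (Suc k') (Suc i') + ?T k' (Suc i') + (Suc i' * ?T (Suc k') (Suc i') + ?T (Suc k') i')" .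
    also have "\<dots> = ((i+k) choose k) * Stirling (Suc n) (i+k)"
      unfolding Suc.IH k i by (simp add: algebra_simps)
    finally show ?thesis .
  qed
qed

lemma P_Suc:
  fixes x :: real
  shows "(\<Sum>i\<le>Suc l. real (Stirling (Suc l) i) * fact (i+k) * x^i)
    = (\<Sum>i\<le>l. real (Stirling l i) * (real i * fact (i+k) * x^i + fact (Suc (i+k)) * x^(Suc i)))"
proof -
  have 1: "(\<Sum>i\<le>Suc l. real (Stirling (Suc l) i) * fact (i+k) * x^i)
     = (\<Sum>i\<le>l. real (Suc i) * real (Stirling l (Suc i)) * fact (Suc i+k) * x^(Suc i))
     + (\<Sum>i\<le>l. real (Stirling l i) * fact (Suc (i+k)) * x^(Suc i))"
    by (simp only: sum.atMost_Suc_shift) (simp add: sum.distrib algebra_simps)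
  have "(\<Sum>i\<le>Suc l. real i * real (Stirling l i) * fact (i+k) * x^i)
     = (\<Sum>i\<le>l. real i * real (Stirling l i) * fact (i+k) * x^i)"
    by simp
  moreover have "(\<Sum>i\<le>Suc l. real i * real (Stirling l i) * fact (i+k) * x^i)
     = (\<Sum>i\<le>l. real (Suc i) * real (Stirling l (Suc i)) * fact (Suc i+k) * x^(Suc i))"
    by (simp only: sum.atMost_Suc_shift)
  moreover have "(\<Sum>i\<le>l. real (Stirling l i) * (real i * fact (i+k) * x^i + fact (Suc (i+k)) * x^(Suc i)))
     = (\<Sum>i\<le>l. real i * real (Stirling l i) * fact (i+k) * x^i) + (\<Sum>i\<le>l. real (Stirling l i) * fact (Suc (i+k)) * x^(Suc i))"
    by (simp add: sum.distrib algebra_simps)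
  ultimately show ?thesis using 1 by linarith
qed

lemma riseA:
  fixes x :: real
  shows "(\<Sum>j\<le>k. real (stirling (k+1) (j+1)) * geom_poly (l+j) x)
    = (1+x)^k * (\<Sum>i\<le>l. real (Stirling l i) * fact (i+k) * x^i)"
proof (induction k arbitrary: l)
  case 0
  then show ?case by (simp add: geom_poly_def atLeast0AtMost)
next
  case (Suc k)
  have "(\<Sum>j\<le>Suc k. real (stirling (Suc k+1) (j+1)) * geom_poly (l+j) x)
     = real (Suc k) * (\<Sum>j\<le>Suc k. real (stirling (Suc k) (Suc j)) * geom_poly (l+j) x)
       + (\<Sum>j\<le>Suc k. real (stirling (Suc k) j) * geom_poly (l+j) x)"
    by (simp add: sum.distrib sum_distrib_left algebra_simps)
  also have "(\<Sum>j\<le>Suc k. real (stirling (Suc k) (Suc j)) * geom_poly (l+j) x)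
     = (\<Sum>j\<le>k. real (stirling (k+1) (j+1)) * geom_poly (l+j) x)"
    by simp
  also have "(\<Sum>j\<le>Suc k. real (stirling (Suc k) j) * geom_poly (l+j) x)
     = (\<Sum>j\<le>k. real (stirling (k+1) (j+1)) * geom_poly (Suc l+j) x)"
    by (simp only: sum.atMost_Suc_shift) simp
  also note Suc.IH
  also note Suc.IH
  also note P_Suc
  also have "real (Suc k) * ((1 + x) ^ k * (\<Sum>i\<le>l. real (Stirling l i) * fact (i + k) * x ^ i)) +
    (1 + x) ^ k * (\<Sum>i\<le>l. real (Stirling l i) * (real i * fact (i + k) * x ^ i + fact (Suc (i + k)) * x ^ Suc i))
    = (1+x)^k * (\<Sum>i\<le>l. real (Stirling l i) * ((real (Suc k) * fact (i + k) * x ^ i) + (real i * fact (i + k) * x ^ i + fact (Suc (i + k)) * x ^ Suc i)))"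
    by (simp add: sum.distrib sum_distrib_left algebra_simps)
  also have "\<dots> = (1+x)^Suc k * (\<Sum>i\<le>l. real (Stirling l i) * fact (i + Suc k) * x ^ i)"
    by (simp add: sum_distrib_left algebra_simps)
  finally show ?case .
qed

lemma stir_conv_real:
  "(\<Sum>l\<le>n. real (n choose l) * real (Stirling (n-l) k) * real (Stirling l i)) = real ((i+k) choose k) * real (Stirling n (i+k))"
proof -
  have "real (\<Sum>l\<le>n. (n choose l) * Stirling (n-l) k * Stirling l i) = real (((i+k) choose k) * Stirling n (i+k))"
    by (simp only: stir_conv)
  then show ?thesis by simp
qed

theorem theorem1:
  fixes n :: nat and x :: real
  assumes "n \<ge> 1" and "x \<noteq> -1"
  shows "harm_geom_poly n x =
    (\<Sum>l=0..n. \<Sum>k=1..n. \<Sum>j=0..k.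
       (-1) ^ (k + 1) / real k * real (n choose l) * real (Stirling (n - l) k)
       * real (stirling (k + 1) (j + 1)) * geom_poly (l + j) x * (x / (1 + x)) ^ k)"
proof -
  define c :: "nat \<Rightarrow> real" where "c k = (-1) ^ (k + 1) / real k" for k
  have x1: "1 + x \<noteq> 0" using assms(2) by auto
  have "(\<Sum>l=0..n. \<Sum>k=1..n. \<Sum>j=0..k.
       (-1) ^ (k + 1) / real k * real (n choose l) * real (Stirling (n - l) k)
       * real (stirling (k + 1) (j + 1)) * geom_poly (l + j) x * (x / (1 + x)) ^ k)
    = (\<Sum>l=0..n. \<Sum>k=1..n. c k * real (n choose l) * real (Stirling (n - l) k) * (x / (1 + x)) ^ k
       * (\<Sum>j\<le>k. real (stirling (k + 1) (j + 1)) * geom_poly (l + j) x))"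
    by (simp add: c_def sum_distrib_left atLeast0AtMost algebra_simps)
  also have "\<dots> = (\<Sum>l=0..n. \<Sum>k=1..n. c k * real (n choose l) * real (Stirling (n - l) k) * x^k
       * (\<Sum>i\<le>l. real (Stirling l i) * fact (i+k) * x^i))"
  proof (intro sum.cong refl)
    fix l k
    have eq: "(x / (1 + x)) ^ k * (1 + x) ^ k = x ^ k"
      using x1 by (simp add: power_mult_distrib[symmetric])
    show "c k * real (n choose l) * real (Stirling (n - l) k) * (x / (1 + x)) ^ k
       * (\<Sum>j\<le>k. real (stirling (k + 1) (j + 1)) * geom_poly (l + j) x)
      = c k * real (n choose l) * real (Stirling (n - l) k) * x^k
       * (\<Sum>i\<le>l. real (Stirling l i) * fact (i+k) * x^i)"
      unfolding riseA by (subst eq[symmetric]) (simp only: mult_ac)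
  qed
  also have "\<dots> = (\<Sum>l=0..n. \<Sum>k=1..n. \<Sum>i\<le>n. c k * real (n choose l) * real (Stirling (n - l) k)
       * real (Stirling l i) * fact (i+k) * x^(i+k))"
  proof (intro sum.cong refl)
    fix l k assume l: "l \<in> {0..n}"
    have "(\<Sum>i\<le>l. c k * real (n choose l) * real (Stirling (n - l) k)
       * real (Stirling l i) * fact (i+k) * x^(i+k)) = (\<Sum>i\<le>n. c k * real (n choose l) * real (Stirling (n - l) k)
       * real (Stirling l i) * fact (i+k) * x^(i+k))"
      by (rule sum.mono_neutral_left) (use l in auto)
    then show "c k * real (n choose l) * real (Stirling (n - l) k) * x^k
       * (\<Sum>i\<le>l. real (Stirling l i) * fact (i+k) * x^i) = (\<Sum>i\<le>n. c k * real (n choose l) * real (Stirling (n - l) k)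
       * real (Stirling l i) * fact (i+k) * x^(i+k))"
      by (simp add: sum_distrib_left power_add algebra_simps)
  qed
  also have "\<dots> = (\<Sum>k=1..n. \<Sum>l=0..n. \<Sum>i\<le>n. c k * real (n choose l) * real (Stirling (n - l) k) * real (Stirling l i) * fact (i+k) * x^(i+k))"
    by (rule sum.swap)
  also have "\<dots> = (\<Sum>k=1..n. \<Sum>i\<le>n. \<Sum>l=0..n. c k * real (n choose l) * real (Stirling (n - l) k) * real (Stirling l i) * fact (i+k) * x^(i+k))"
    by (rule sum.cong[OF refl], rule sum.swap)
  also have "\<dots> = (\<Sum>k=1..n. \<Sum>i\<le>n. c k * fact (i+k) * x^(i+k) *
       (\<Sum>l\<le>n. real (n choose l) * real (Stirling (n - l) k) * real (Stirling l i)))"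
    by (simp add: atLeast0AtMost sum_distrib_left mult_ac)
  also have "\<dots> = (\<Sum>k=1..n. \<Sum>i\<le>n. c k * fact (i+k) * x^(i+k) * real ((i+k) choose k) * real (Stirling n (i+k)))"
    unfolding stir_conv_real by (simp only: mult.assoc)
  finally have R: "?thesis = (harm_geom_poly n x = (\<Sum>k=1..n. \<Sum>i\<le>n. c k * fact (i+k) * x^(i+k) * real ((i+k) choose k) * real (Stirling n (i+k))))"
    by simp
  define g where "g k K = c k * real (K choose k) * real (Stirling n K) * fact K * x^K" for k K
  have "harm_geom_poly n x = (\<Sum>K=1..n. \<Sum>k\<le>K. g k K)"
    unfolding harm_geom_poly_def g_def c_def harm_binom by (simp add: sum_distrib_left algebra_simps)
  also have "\<dots> = (\<Sum>K=1..n. \<Sum>k=1..n. g k K)"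
  proof (rule sum.cong[OF refl])
    fix K assume K: "K \<in> {1..n}"
    have "(\<Sum>k\<le>K. g k K) = (\<Sum>k\<le>n. g k K)"
      by (rule sum.mono_neutral_left) (use K in \<open>auto simp: g_def\<close>)
    also have "\<dots> = (\<Sum>k=1..n. g k K)"
      by (rule sum.mono_neutral_right) (auto simp: g_def c_def)
    finally show "(\<Sum>k\<le>K. g k K) = (\<Sum>k=1..n. g k K)" .
  qed
  also have "\<dots> = (\<Sum>k=1..n. \<Sum>K=1..n. g k K)"
    by (rule sum.swap)
  also have "\<dots> = (\<Sum>k=1..n. \<Sum>i\<le>n. g k (i+k))"
  proof (rule sum.cong[OF refl])
    fix k assume k: "k \<in> {1..n}"
    have "(\<Sum>K=1..n. g k K) = (\<Sum>K=1..n+k. g k K)"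
      by (rule sum.mono_neutral_left) (auto simp: g_def)
    also have "\<dots> = (\<Sum>K=k..n+k. g k K)"
      by (rule sum.mono_neutral_right) (use k in \<open>auto simp: g_def\<close>)
    also have "\<dots> = (\<Sum>i=0..n. g k (i+k))"
      using sum.shift_bounds_cl_nat_ivl[of "g k" 0 k n] by simp
    finally show "(\<Sum>K=1..n. g k K) = (\<Sum>i\<le>n. g k (i+k))" by (simp add: atLeast0AtMost)
  qed
  finally show ?thesis unfolding R g_def by (simp add: algebra_simps)
qed

end
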